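(* Under the Local Regularity Assumption (see context), let $L:=\sup\{\|\zeta\|:\zeta\in\partial f(x),\,x\in\mathcal{X}\cap B_\epsilon(\bar x)\}$, assumed finite and positive, and $\tau:=\mu/L$. Let $x_0\in B_{\epsilon/4}(\bar x)\cap\mathcal{X}$ satisfy $$\mathrm{dist}(x_0,\mathcal{X}^* )\le\min\Big\{\frac{3\epsilon\mu^2}{64L^2},\frac{\mu}{2\rho}\Big\}.$$ Then the iterates $x_k$ of the Polyak subgradient method started at $x_0$ all lie in $B_\epsilon(\bar x)$ and satisfy $$\mathrm{dist}^2(x_{k+1},\mathcal{X}^* )\le\Big(1-\frac{\tau^2}{2}\Big)\mathrm{dist}^2(x_k,\mathcal{X}^* )\quad\text{for all }k\ge0.$$ Moreover, the iterates converge to some $x_\infty\in\mathcal{X}^*$ with $$\|x_k-x_\infty\|\le\frac{16L^3\,\mathrm{dist}(x_0,\mathcal{X}^* )}{3\mu^3}\Big(1-\frac{\tau^2}{2}\Big)^{k/2}\quad\text{for all }k\ge0.$$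
   Context: $\mathbf{E}$ is a Euclidean space with norm $\|\cdot\|$; $B_\epsilon(z)$ is the closed ball of radius $\epsilon$ about $z$; $\mathrm{proj}_{\mathcal{X}}$ is the Euclidean projection. For $f\colon\mathbf{E}\to\mathbb{R}$, $\partial f(x)$ is the (Fréchet) subdifferential: the set of $\xi$ with $f(y)\ge f(x)+\langle\xi,y-x\rangle+o(\|y-x\|)$ as $y\to x$. Local Regularity Assumption: $\mathcal{X}\subset\mathbf{E}$ is nonempty closed convex, $f\colon\mathbf{E}\to\mathbb{R}$ is continuous, $\mathcal{X}^*:=\operatorname{argmin}_{x\in\mathcal{X}}f$ is nonempty, $\bar x\in\mathcal{X}^*$, and $\epsilon,\mu,\rho>0$ satisfy: (local weak convexity) $f(y)\ge f(x)+\langle\zeta,y-x\rangle-\frac\rho2\|y-x\|^2$ for all $x,y\in\mathcal{X}\cap B_\epsilon(\bar x)$ and $\zeta\in\partial f(x)$; (local sharpness) $f(x)-\inf_{\mathcal{X}}f\ge\mu\,\mathrm{dist}(x,\mathcal{X}^* )$ for all $x\in\mathcal{X}\cap B_\epsilon(\bar x)$. Polyak subgradient method: given $x_k$, choose $\zeta_k\in\partial f(x_k)$; if $\zeta_k=0$ set $x_{k+1}=x_k$, otherwise $x_{k+1}=\mathrm{proj}_{\mathcal{X}}\big(x_k-\frac{f(x_k)-\min_{\mathcal{X}}f}{\|\zeta_k\|^2}\zeta_k\big)$. *)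

theory Defs
  imports "HOL-Analysis.Analysis"
begin

definition frechet_subdiff :: "('a::euclidean_space \<Rightarrow> real) \<Rightarrow> 'a \<Rightarrow> 'a set" where
  "frechet_subdiff f x = {\<xi>. \<forall>e>0. \<exists>d>0. \<forall>y. norm (y - x) < d \<longrightarrow>
       f y \<ge> f x + inner \<xi> (y - x) - e * norm (y - x)}"

definition argmin_on :: "('a \<Rightarrow> real) \<Rightarrow> 'a set \<Rightarrow> 'a set" where
  "argmin_on f X = {x \<in> X. \<forall>y\<in>X. f x \<le> f y}"

end

theory Submission
  imports Defs
begin



lemma fstar_eq:
  assumes "xbar \<in> argmin_on f X"
  shows "(INF y\<in>X. f y) = f xbar"
proof (rule antisym)
  have x: "xbar \<in> X" "\<And>y. y \<in> X \<Longrightarrow> f xbar \<le> f y" using assms by (auto simp: argmin_on_def)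
  have "bdd_below (f ` X)" using x by (intro bdd_belowI[of _ "f xbar"]) auto
  then show "(INF y\<in>X. f y) \<le> f xbar" using x by (simp add: cINF_lower)
  show "f xbar \<le> (INF y\<in>X. f y)" using x by (intro cINF_greatest) auto
qed

lemma argmin_closed:
  assumes "xbar \<in> argmin_on f X" "closed X" "continuous_on UNIV f"
  shows "closed (argmin_on f X)"
proof -
  have "argmin_on f X = X \<inter> {y. f y \<le> f xbar}"
    using assms(1) unfolding argmin_on_def by (auto intro: order_trans)
  moreover have "closed {y. f y \<le> f xbar}"
    using assms(3) by (intro closed_Collect_le) (auto intro: continuous_on_const)
  ultimately show ?thesis using assms(2) by auto
qed

lemma one_step:
  fixes f :: "'a::euclidean_space \<Rightarrow> real"
  assumes X_closed: "closed X" and X_convex: "convex X" and X_ne: "X \<noteq> {}"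
    and f_cont: "continuous_on UNIV f"
    and xbar: "xbar \<in> argmin_on f X"
    and pos: "\<epsilon> > 0" "\<mu> > 0" "\<rho> > 0" "L > 0"
    and weakcvx: "\<And>u v \<xi>. u \<in> X \<inter> cball xbar \<epsilon> \<Longrightarrow> v \<in> X \<inter> cball xbar \<epsilon> \<Longrightarrow>
        \<xi> \<in> frechet_subdiff f u \<Longrightarrow> f v \<ge> f u + inner \<xi> (v - u) - \<rho> / 2 * (norm (v - u))\<^sup>2"
    and sharp: "\<And>u. u \<in> X \<inter> cball xbar \<epsilon> \<Longrightarrow>
        f u - (INF y\<in>X. f y) \<ge> \<mu> * infdist u (argmin_on f X)"
    and zL: "norm z \<le> L" and zs: "z \<in> frechet_subdiff f xk"
    and xkX: "xk \<in> X" and xkb: "dist xbar xk \<le> \<epsilon>/2"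
    and d1: "infdist xk (argmin_on f X) \<le> \<epsilon>/2"
    and d2: "infdist xk (argmin_on f X) \<le> \<mu>/(2*\<rho>)"
    and xk1: "xk1 = (if z = 0 then xk
        else closest_point X (xk - ((f xk - (INF y\<in>X. f y)) / (norm z)\<^sup>2) *\<^sub>R z))"
  shows "xk1 \<in> X"
    "(infdist xk1 (argmin_on f X))\<^sup>2 \<le> (1 - (\<mu> / L)\<^sup>2 / 2) * (infdist xk (argmin_on f X))\<^sup>2"
    "norm (xk1 - xk) \<le> 4/3 * infdist xk (argmin_on f X)"
    "infdist xk (argmin_on f X) > 0 \<Longrightarrow> 3*\<mu>/4 \<le> L"
proof -
  define S where "S = argmin_on f X"
  define d where "d = infdist xk S"
  define a where "a = f xk - (INF y\<in>X. f y)"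
  have fs: "(INF y\<in>X. f y) = f xbar" using fstar_eq[OF xbar] .
  have Sc: "closed S" unfolding S_def using argmin_closed[OF xbar X_closed f_cont] .
  have Sne: "S \<noteq> {}" using xbar S_def by auto
  have SX: "S \<subseteq> X" unfolding S_def argmin_on_def by auto
  obtain p where pS: "p \<in> S" and dp: "d = dist xk p"
    using infdist_attains_inf[OF Sc Sne, of xk] d_def by metis
  have pf: "f p = f xbar" using pS xbar unfolding S_def argmin_on_def by (auto intro: antisym)
  have d0: "d \<ge> 0" unfolding d_def by (rule infdist_nonneg)
  have xkB: "xk \<in> X \<inter> cball xbar \<epsilon>" using xkX xkb pos by auto
  have "dist xbar p \<le> dist xbar xk + dist xk p" by (rule dist_triangle)
  then have pB: "p \<in> X \<inter> cball xbar \<epsilon>" using pS SX xkb d1 dp d_def S_def by auto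
  have amu: "a \<ge> \<mu> * d" using sharp[OF xkB] unfolding a_def d_def S_def .
  have wc: "f p \<ge> f xk + inner z (p - xk) - \<rho> / 2 * (norm (p - xk))\<^sup>2"
    using weakcvx[OF xkB pB zs] .
  define c where "c = inner z (xk - p)"
  have npx: "norm (p - xk) = d" using dp by (simp add: dist_norm norm_minus_commute)
  have "inner z (p - xk) = - c" unfolding c_def by (simp add: inner_diff_right)
  then have cge: "c \<ge> a - \<rho>/2 * d\<^sup>2" using wc npx pf fs unfolding a_def by simp
  have rd: "\<rho> * d\<^sup>2 \<le> \<mu> * d / 2"
  proof -
    have "\<rho> * d \<le> \<mu> / 2" using d2 pos unfolding d_def S_def by (simp add: field_simps)
    then have "(\<rho> * d) * d \<le> (\<mu>/2) * d" using d0 by (rule mult_right_mono)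
    then show ?thesis by (simp add: power2_eq_square algebra_simps)
  qed
  have a0: "a \<ge> 0" using amu d0 pos by (metis mult_nonneg_nonneg order_trans less_imp_le)
  have c34: "c \<ge> 3/4 * a" using cge rd amu by linarith
  have cle: "c \<le> norm z * d" unfolding c_def using norm_cauchy_schwarz[of z "xk - p"] dp
    by (simp add: dist_norm)
  have gL: "3*\<mu>/4 \<le> L" if "d > 0"
  proof -
    have "3/4 * \<mu> * d \<le> norm z * d" using c34 cle amu by linarith
    then have "3/4*\<mu> \<le> norm z" using that by simp
    then show ?thesis using zL by linarith
  qed
  show "infdist xk (argmin_on f X) > 0 \<Longrightarrow> 3*\<mu>/4 \<le> L" using gL d_def S_def by simp
  have "xk1 \<in> X \<and> (infdist xk1 S)\<^sup>2 \<le> (1 - (\<mu> / L)\<^sup>2 / 2) * d\<^sup>2 \<and> norm (xk1 - xk) \<le> 4/3 * d"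
  proof (cases "z = 0")
    case True
    then have "c = 0" unfolding c_def by simp
    then have "a \<le> 0" using c34 by simp
    then have "\<mu> * d \<le> 0" using amu by simp
    then have "d = 0" using d0 pos by (simp add: mult_le_0_iff)
    moreover have "xk1 = xk" using xk1 True by simp
    ultimately show ?thesis using xkX d_def by simp
  next
    case False
    define g where "g = norm z"
    have g0: "g > 0" using False g_def by simp
    define t where "t = a / g\<^sup>2"
    define y where "y = xk - t *\<^sub>R z"
    have x1: "xk1 = closest_point X y" using xk1 False unfolding y_def t_def g_def a_def by simp
    have inX: "xk1 \<in> X" using x1 closest_point_in_set[OF X_closed X_ne] by simp
    have t0: "t \<ge> 0" unfolding t_def using a0 by simp
    have "norm (y - p) ^2 = norm (xk - p) ^2 - 2 * inner (xk - p) (t *\<^sub>R z) + norm (t *\<^sub>R z)^2"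
      unfolding y_def using dot_norm_neg[of "xk - p" "t *\<^sub>R z"]
      by (simp add: algebra_simps)
    also have "\<dots> = d\<^sup>2 - 2 * t * c + t\<^sup>2 * g\<^sup>2"
      using npx unfolding c_def g_def
      by (simp add: norm_minus_commute inner_commute power_mult_distrib)
    also have "t\<^sup>2 * g\<^sup>2 = a\<^sup>2 / g\<^sup>2" unfolding t_def using g0 by (simp add: field_simps power2_eq_square)
    also have "2 * t * c \<ge> 2 * t * (a - \<rho>/2 * d\<^sup>2)" using t0 cge by (simp add: mult_left_mono)
    then have "d\<^sup>2 - 2 * t * c + a\<^sup>2 / g\<^sup>2 \<le> d\<^sup>2 - 2 * t * (a - \<rho>/2 * d\<^sup>2) + a\<^sup>2 / g\<^sup>2" by simp
    also have "\<dots> = d\<^sup>2 - a\<^sup>2/g\<^sup>2 + t * (\<rho> * d\<^sup>2)" unfolding t_def using g0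
      by (simp add: field_simps power2_eq_square)
    also have "t * (\<rho> * d\<^sup>2) \<le> t * (a/2)" using rd amu t0 by (intro mult_left_mono) auto
    also have "t * (a/2) = a\<^sup>2 / (2 * g\<^sup>2)" unfolding t_def by (simp add: power2_eq_square)
    finally have n1: "norm (y - p) ^2 \<le> d\<^sup>2 - a\<^sup>2 / (2*g\<^sup>2)" by simp
    have "(\<mu> * d)\<^sup>2 \<le> a\<^sup>2" using amu d0 pos by (intro power_mono) auto
    moreover have "g\<^sup>2 \<le> L\<^sup>2" using zL g_def g0 by (intro power_mono) auto
    ultimately have "(\<mu> * d)\<^sup>2 / (2*L\<^sup>2) \<le> a\<^sup>2 / (2*g\<^sup>2)" using g0 pos
      by (intro frac_le) auto
    moreover have "(1 - (\<mu> / L)\<^sup>2 / 2) * d\<^sup>2 = d\<^sup>2 - (\<mu> * d)\<^sup>2 / (2*L\<^sup>2)"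
      using pos by (simp add: field_simps power2_eq_square)
    ultimately have n2: "norm (y - p) ^2 \<le> (1 - (\<mu> / L)\<^sup>2 / 2) * d\<^sup>2" using n1
      by linarith
    have "infdist xk1 S \<le> dist xk1 p" using pS by (rule infdist_le)
    also have "dist xk1 p = dist (closest_point X y) (closest_point X p)"
      using x1 closest_point_self[of p X] pS SX by auto
    also have "\<dots> \<le> dist y p" by (rule closest_point_lipschitz[OF X_convex X_closed X_ne])
    finally have "(infdist xk1 S)\<^sup>2 \<le> (dist y p)\<^sup>2" using infdist_nonneg by (intro power_mono) auto
    then have i2: "(infdist xk1 S)\<^sup>2 \<le> (1 - (\<mu> / L)\<^sup>2 / 2) * d\<^sup>2" using n2 by (simp add: dist_norm)
    have "norm (xk1 - xk) = dist (closest_point X y) (closest_point X xk)"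
      using x1 closest_point_self[of xk X] xkX by (simp add: dist_norm)
    also have "\<dots> \<le> dist y xk" by (rule closest_point_lipschitz[OF X_convex X_closed X_ne])
    also have "dist y xk = t * g" unfolding y_def g_def using t0 by (simp add: dist_norm)
    also have "t * g = a / g" unfolding t_def using g0 by (simp add: power2_eq_square)
    also have "a / g \<le> 4/3 * d"
    proof -
      have "3/4 * a \<le> g * d" using c34 cle unfolding g_def by linarith
      then show ?thesis using g0 by (simp add: field_simps)
    qed
    finally show ?thesis using inX i2 by simp
  qed
  then show "xk1 \<in> X"
    "(infdist xk1 (argmin_on f X))\<^sup>2 \<le> (1 - (\<mu> / L)\<^sup>2 / 2) * (infdist xk (argmin_on f X))\<^sup>2"
    "norm (xk1 - xk) \<le> 4/3 * infdist xk (argmin_on f X)"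
    unfolding d_def S_def by auto
qed


theorem theorem5p5:
  fixes f :: "'a::euclidean_space \<Rightarrow> real"
    and X :: "'a set" and xbar :: 'a and \<epsilon> \<mu> \<rho> L :: real
    and x \<zeta> :: "nat \<Rightarrow> 'a"
  assumes X_closed: "closed X" and X_convex: "convex X" and X_ne: "X \<noteq> {}"
    and f_cont: "continuous_on UNIV f"
    and xbar: "xbar \<in> argmin_on f X"
    and pos: "\<epsilon> > 0" "\<mu> > 0" "\<rho> > 0"
    and weakcvx: "\<And>u v \<xi>. u \<in> X \<inter> cball xbar \<epsilon> \<Longrightarrow> v \<in> X \<inter> cball xbar \<epsilon> \<Longrightarrow>
        \<xi> \<in> frechet_subdiff f u \<Longrightarrow> f v \<ge> f u + inner \<xi> (v - u) - \<rho> / 2 * (norm (v - u))\<^sup>2"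
    and sharp: "\<And>u. u \<in> X \<inter> cball xbar \<epsilon> \<Longrightarrow>
        f u - (INF y\<in>X. f y) \<ge> \<mu> * infdist u (argmin_on f X)"
    and L_def: "L = Sup {norm \<xi> | \<xi> u. u \<in> X \<inter> cball xbar \<epsilon> \<and> \<xi> \<in> frechet_subdiff f u}"
    and L_ne: "{norm \<xi> | \<xi> u. u \<in> X \<inter> cball xbar \<epsilon> \<and> \<xi> \<in> frechet_subdiff f u} \<noteq> {}"
    and L_bdd: "bdd_above {norm \<xi> | \<xi> u. u \<in> X \<inter> cball xbar \<epsilon> \<and> \<xi> \<in> frechet_subdiff f u}"
    and L_pos: "L > 0"
    and x0: "x 0 \<in> cball xbar (\<epsilon> / 4) \<inter> X"
    and x0_dist: "infdist (x 0) (argmin_on f X) \<le> min (3 * \<epsilon> * \<mu>\<^sup>2 / (64 * L\<^sup>2)) (\<mu> / (2 * \<rho>))"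
    and subgrad: "\<And>k. \<zeta> k \<in> frechet_subdiff f (x k)"
    and step: "\<And>k. x (Suc k) = (if \<zeta> k = 0 then x k
        else closest_point X (x k - ((f (x k) - (INF y\<in>X. f y)) / (norm (\<zeta> k))\<^sup>2) *\<^sub>R \<zeta> k))"
  shows "(\<forall>k. x k \<in> cball xbar \<epsilon>)
    \<and> (\<forall>k. (infdist (x (Suc k)) (argmin_on f X))\<^sup>2
            \<le> (1 - (\<mu> / L)\<^sup>2 / 2) * (infdist (x k) (argmin_on f X))\<^sup>2)
    \<and> (\<exists>xinf \<in> argmin_on f X. x \<longlonglongrightarrow> xinf \<and>
        (\<forall>k. norm (x k - xinf) \<le> 16 * L ^ 3 * infdist (x 0) (argmin_on f X) / (3 * \<mu> ^ 3)
              * (1 - (\<mu> / L)\<^sup>2 / 2) powr (real k / 2)))"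
proof -
  define S where "S = argmin_on f X"
  define D where "D k = infdist (x k) S" for k
  define d0 where "d0 = D 0"
  define q where "q = 1 - (\<mu> / L)\<^sup>2 / 2"
  define \<tau> where "\<tau> = \<mu> / L"
  have \<tau>0: "\<tau> > 0" unfolding \<tau>_def using pos L_pos by simp
  have q\<tau>: "q = 1 - \<tau>\<^sup>2/2" unfolding q_def \<tau>_def ..
  have Sc: "closed S" unfolding S_def using argmin_closed[OF xbar X_closed f_cont] .
  have Sne: "S \<noteq> {}" using xbar S_def by auto
  have D0: "D k \<ge> 0" for k unfolding D_def by (rule infdist_nonneg)
  have d0a: "d0 \<le> 3 * \<epsilon> * \<mu>\<^sup>2 / (64 * L\<^sup>2)" "d0 \<le> \<mu> / (2 * \<rho>)"
    using x0_dist unfolding d0_def D_def S_def by auto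
  have d0a': "d0 \<le> 3 * \<epsilon> * \<tau>\<^sup>2 / 64" 
  proof -
    have "3 * \<epsilon> * \<tau>\<^sup>2 / 64 = 3 * \<epsilon> * \<mu>\<^sup>2 / (64 * L\<^sup>2)" unfolding \<tau>_def by (simp add: power_divide)
    then show ?thesis using d0a(1) by linarith
  qed
  have x0X: "x 0 \<in> X" and x0b: "dist xbar (x 0) \<le> \<epsilon>/4" using x0 by auto
  have zL: "norm (\<zeta> k) \<le> L" if "x k \<in> X" "dist xbar (x k) \<le> \<epsilon>" for k
  proof -
    have "norm (\<zeta> k) \<in> {norm \<xi> | \<xi> u. u \<in> X \<inter> cball xbar \<epsilon> \<and> \<xi> \<in> frechet_subdiff f u}"
      using that subgrad[of k] by auto
    then show ?thesis unfolding L_def by (rule cSup_upper[OF _ L_bdd])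
  qed
  have OS: "x (Suc k) \<in> X \<and> (D (Suc k))\<^sup>2 \<le> q * (D k)\<^sup>2 \<and> norm (x (Suc k) - x k) \<le> 4/3 * D k
     \<and> (D k > 0 \<longrightarrow> 3*\<mu>/4 \<le> L)"
    if "x k \<in> X" "dist xbar (x k) \<le> \<epsilon>/2" "D k \<le> \<epsilon>/2" "D k \<le> \<mu>/(2*\<rho>)" for k
  proof -
    have h: "D k \<le> \<epsilon>/2" "D k \<le> \<mu>/(2*\<rho>)" "dist xbar (x k) \<le> \<epsilon>" using that pos by auto
    note o = one_step[OF X_closed X_convex X_ne f_cont xbar pos L_pos weakcvx sharp
       zL[OF that(1) h(3)] subgrad[of k] that(1,2) h(1,2)[unfolded D_def S_def] step[of k]]
    show ?thesis using o unfolding D_def S_def q_def by blast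
  qed
  show ?thesis
  proof (cases "d0 = 0")
    case True
    have xc: "x k = x 0" for k
    proof (induction k)
      case (Suc k)
      have "D k = 0" using Suc True unfolding d0_def D_def by simp
      then have "norm (x (Suc k) - x k) \<le> 0" using OS[of k] Suc x0X x0b pos by auto
      then show ?case using Suc by simp
    qed simp
    have x0S: "x 0 \<in> S" using True in_closed_iff_infdist_zero[OF Sc Sne] unfolding d0_def D_def by simp
    have Dz: "D k = 0" for k using xc[of k] True unfolding d0_def D_def by simp
    show ?thesis
    proof (intro conjI allI bexI[of _ "x 0"])
      fix k show "x k \<in> cball xbar \<epsilon>" using xc[of k] x0b pos by simp
    next
      fix k show "(infdist (x (Suc k)) (argmin_on f X))\<^sup>2
            \<le> (1 - (\<mu> / L)\<^sup>2 / 2) * (infdist (x k) (argmin_on f X))\<^sup>2"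
        using Dz[of k] Dz[of "Suc k"] unfolding D_def S_def by simp
    next
      have "\<forall>n. x n = x 0" using xc by blast
      then show "x \<longlonglongrightarrow> x 0" by (intro tendsto_eventually always_eventually)
    next
      fix k show "norm (x k - x 0) \<le> 16 * L ^ 3 * infdist (x 0) (argmin_on f X) / (3 * \<mu> ^ 3)
              * (1 - (\<mu> / L)\<^sup>2 / 2) powr (real k / 2)"
        using xc[of k] True unfolding d0_def D_def S_def by simp
    next
      show "x 0 \<in> argmin_on f X" using x0S S_def by simp
    qed
  next
    case False
    then have d0p: "d0 > 0" using D0 d0_def by (simp add: less_le)
    have d0e: "d0 \<le> \<epsilon>/4"
    proof -
      have "xbar \<in> S" using xbar S_def by simp
      then have "d0 \<le> dist (x 0) xbar" unfolding d0_def D_def by (rule infdist_le)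
      then show ?thesis using x0b by (simp add: dist_commute)
    qed
    have h0: "dist xbar (x 0) \<le> \<epsilon>/2" "D 0 \<le> \<epsilon>/2" "D 0 \<le> \<mu>/(2*\<rho>)"
      using x0b d0e d0a(2) pos unfolding d0_def by auto
    have "D 0 > 0" using d0p d0_def by simp
    then have "3*\<mu>/4 \<le> L" using OS[OF x0X h0] by blast
    then have \<tau>le: "\<tau> \<le> 4/3" unfolding \<tau>_def using L_pos by (simp add: field_simps)
    have \<tau>2: "\<tau>\<^sup>2 \<le> 16/9" using power_mono[OF \<tau>le, of 2] \<tau>0 by (simp add: power2_eq_square)
    have \<tau>3: "\<tau>^3 \<le> 64/27"
    proof -
      have "\<tau>^3 \<le> (4/3)^3" using \<tau>le \<tau>0 by (intro power_mono) auto
      also have "(4/3::real)^3 = 64/27" by (simp add: power3_eq_cube)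
      finally show ?thesis .
    qed
    have q19: "q \<ge> 1/9" using \<tau>2 q\<tau> by simp
    have q1: "q < 1" using \<tau>0 q\<tau> by simp
    define r where "r = sqrt q"
    have r0: "r > 0" unfolding r_def using q19 by simp
    have r1: "r < 1" unfolding r_def using q1 by simp
    have rq: "r\<^sup>2 = q" unfolding r_def using q19 by simp
    have sq_le: "sqrt y \<le> b" if "y \<le> b\<^sup>2" "0 \<le> b" for y b :: real
      using real_sqrt_le_mono[OF that(1)] that(2) by simp
    have ra: "r \<le> 1 - \<tau>\<^sup>2/4"
    proof -
      have "(1 - \<tau>\<^sup>2/4)\<^sup>2 = q + (\<tau>\<^sup>2)\<^sup>2/16" unfolding q\<tau> by (simp add: power2_eq_square algebra_simps)
      then have "q \<le> (1 - \<tau>\<^sup>2/4)\<^sup>2" using zero_le_power2[of "\<tau>\<^sup>2"] by linarith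
      then show ?thesis unfolding r_def using \<tau>2 by (intro sq_le) auto
    qed
    have rb: "r \<le> 1 - \<tau>^3/4"
    proof -
      have e: "(1 - \<tau>^3/4)\<^sup>2 - q = \<tau>\<^sup>2/16 * ((\<tau>\<^sup>2-3/2)\<^sup>2 + 3*(\<tau>-4/3)\<^sup>2 + 5/12)"
        unfolding q\<tau> by (simp add: power2_eq_square power3_eq_cube algebra_simps)
      have "\<tau>\<^sup>2/16 * ((\<tau>\<^sup>2-3/2)\<^sup>2 + 3*(\<tau>-4/3)\<^sup>2 + 5/12) \<ge> 0" by simp
      then have "q \<le> (1 - \<tau>^3/4)\<^sup>2" using e by linarith
      then show ?thesis unfolding r_def using \<tau>3 by (intro sq_le) auto
    qed
    define B where "B = 4/3 * d0 / (1 - r)"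
    have B0: "B > 0" unfolding B_def using d0p r1 by simp
    have Br: "B * (1 - r) = 4/3 * d0" unfolding B_def using r1 by (simp add: field_simps)
    have Bs: "B \<le> \<epsilon>/4"
    proof -
      have "\<tau>\<^sup>2/4 \<le> 1 - r" using ra by simp
      then have "B * (\<tau>\<^sup>2/4) \<le> B * (1 - r)" using B0 by (intro mult_left_mono) auto
      then have "B * \<tau>\<^sup>2 \<le> 16/3 * d0" using Br by simp
      also have "\<dots> \<le> \<epsilon> * \<tau>\<^sup>2 / 4" using d0a' by simp
      finally show ?thesis using \<tau>0 by simp
    qed
    have Bfin: "B \<le> 16 * L ^ 3 * d0 / (3 * \<mu> ^ 3)"
    proof -
      have "\<tau>^3/4 \<le> 1 - r" using rb by simp
      then have "B * (\<tau>^3/4) \<le> B * (1 - r)" using B0 by (intro mult_left_mono) auto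
      then have "B * \<tau>^3 \<le> 16/3 * d0" using Br by simp
      moreover have "\<tau>^3 = \<mu>^3 / L^3" unfolding \<tau>_def by (simp add: power_divide)
      ultimately have "B * \<mu>^3 \<le> 16/3 * d0 * L^3" using L_pos by (simp add: field_simps)
      then show ?thesis using pos by (simp add: field_simps)
    qed
    define P where "P k \<longleftrightarrow> x k \<in> X \<and> D k \<le> d0 * r^k \<and> norm (x k - x 0) \<le> B * (1 - r^k)" for k
    have G: "dist xbar (x k) \<le> \<epsilon>/2 \<and> D k \<le> \<epsilon>/2 \<and> D k \<le> \<mu>/(2*\<rho>)" if "P k" for k
    proof -
      have rk: "r^k \<le> 1" "r^k \<ge> 0" using r0 r1 by (auto intro: power_le_one)
      have "dist xbar (x k) \<le> dist xbar (x 0) + dist (x 0) (x k)" by (rule dist_triangle)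
      also have "dist (x 0) (x k) = norm (x k - x 0)" by (simp add: dist_norm norm_minus_commute)
      also have "\<dots> \<le> B * (1 - r^k)" using that P_def by simp
      also have "\<dots> \<le> B" using B0 rk by (simp add: mult_left_le)
      finally have 1: "dist xbar (x k) \<le> \<epsilon>/2" using x0b Bs by simp
      have "D k \<le> d0 * r^k" using that P_def by simp
      also have "\<dots> \<le> d0" using d0p rk by (simp add: mult_left_le)
      finally show ?thesis using 1 d0e d0a(2) pos by simp
    qed
    have Pk: "P k" for k
    proof (induction k)
      case 0 show ?case unfolding P_def d0_def using x0X by simp
    next
      case (Suc k)
      have g: "x k \<in> X" using Suc P_def by simp
      note o = OS[OF g conjunct1[OF G[OF Suc]] conjunct1[OF conjunct2[OF G[OF Suc]]]
          conjunct2[OF conjunct2[OF G[OF Suc]]]]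
      have Dk: "D k \<le> d0 * r^k" "norm (x k - x 0) \<le> B * (1 - r^k)" using Suc P_def by auto
      have "(r * D k)\<^sup>2 = q * (D k)\<^sup>2" using rq by (simp add: power_mult_distrib)
      then have "(D (Suc k))\<^sup>2 \<le> (r * D k)\<^sup>2" using o by linarith
      then have "D (Suc k) \<le> r * D k" by (rule power2_le_imp_le) (use r0 D0[of k] in simp)
      also have "\<dots> \<le> r * (d0 * r^k)" using Dk r0 by (intro mult_left_mono) auto
      finally have D1: "D (Suc k) \<le> d0 * r^Suc k" by (simp add: algebra_simps)
      have "norm (x (Suc k) - x 0) \<le> norm (x (Suc k) - x k) + norm (x k - x 0)"
        by (rule order_trans[OF _ norm_triangle_ineq]) simp
      also have "\<dots> \<le> 4/3 * D k + B * (1 - r^k)" using o Dk by linarith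
      also have "\<dots> \<le> 4/3 * (d0 * r^k) + B * (1 - r^k)" using Dk by simp
      also have "4/3 * (d0 * r^k) = B * (1 - r) * r^k" by (subst Br) simp
      also have "B * (1 - r) * r^k + B * (1 - r^k) = B * (1 - r^Suc k)" by (simp add: algebra_simps)
      finally show ?case unfolding P_def using o D1 by simp
    qed
    have Gk: "dist xbar (x k) \<le> \<epsilon>/2 \<and> D k \<le> \<epsilon>/2 \<and> D k \<le> \<mu>/(2*\<rho>)" for k using G[OF Pk] .
    have Xk: "x k \<in> X" for k using Pk P_def by simp
    have Dk: "D k \<le> d0 * r^k" for k using Pk P_def by simp
    have OSk: "x (Suc k) \<in> X \<and> (D (Suc k))\<^sup>2 \<le> q * (D k)\<^sup>2 \<and> norm (x (Suc k) - x k) \<le> 4/3 * D k" for k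
      using OS[OF Xk[of k]] Gk[of k] by blast
    have stp: "norm (x (Suc k) - x k) \<le> B * (1 - r) * r^k" for k
    proof -
      have "norm (x (Suc k) - x k) \<le> 4/3 * D k" using OSk by blast
      also have "\<dots> \<le> 4/3 * (d0 * r^k)" using Dk[of k] by simp
      also have "4/3 * (d0 * r^k) = B * (1 - r) * r^k" by (subst Br) simp
      finally show ?thesis .
    qed
    have cau: "norm (x (m + k) - x k) \<le> B * (r^k - r^(m+k))" for m k
    proof (induction m)
      case (Suc m)
      have "norm (x (Suc m + k) - x k) \<le> norm (x (Suc (m + k)) - x (m + k)) + norm (x (m + k) - x k)"
        by (rule order_trans[OF _ norm_triangle_ineq]) simp
      also have "\<dots> \<le> B * (1 - r) * r^(m+k) + B * (r^k - r^(m+k))" using stp[of "m+k"] Suc by linarith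
      also have "\<dots> = B * (r^k - r^(Suc m + k))" by (simp add: algebra_simps)
      finally show ?case .
    qed simp
    have cau2: "dist (x n) (x k) \<le> B * r^k" if "n \<ge> k" for n k
    proof -
      define m where "m = n - k"
      have "n = m + k" using that unfolding m_def by simp
      then have "dist (x n) (x k) \<le> B * (r^k - r^(m+k))" using cau[of m k] by (simp add: dist_norm)
      also have "\<dots> \<le> B * r^k" using B0 r0 by (simp add: mult_left_mono)
      finally show ?thesis .
    qed
    have "Cauchy x"
    proof (rule metric_CauchyI)
      fix e :: real assume e: "e > 0"
      have "0 < e/(2*B)" using e B0 by simp
      then obtain M where M: "r^M < e / (2*B)" using real_arch_pow_inv r1 by blast
      have BM: "B * r^M < e/2" using M B0 by (simp add: field_simps)
      show "\<exists>M. \<forall>m\<ge>M. \<forall>n\<ge>M. dist (x m) (x n) < e"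
      proof (intro exI allI impI)
        fix m n assume "m \<ge> M" "n \<ge> M"
        then have "dist (x m) (x M) \<le> B * r^M" "dist (x n) (x M) \<le> B * r^M" using cau2 by blast+
        then have "dist (x m) (x n) \<le> B * r^M + B * r^M"
          using dist_triangle[of "x m" "x n" "x M"] dist_commute[of "x M" "x n"] by linarith
        then show "dist (x m) (x n) < e" using BM by linarith
      qed
    qed
    then obtain xinf where lim: "x \<longlonglongrightarrow> xinf" using Cauchy_convergent_iff unfolding convergent_def by blast
    have bnd: "norm (x k - xinf) \<le> B * r^k" for k
    proof -
      have "(\<lambda>m. x (m + k)) \<longlonglongrightarrow> xinf" using LIMSEQ_ignore_initial_segment[OF lim, of k] by simp
      then have "(\<lambda>m. dist (x (m + k)) (x k)) \<longlonglongrightarrow> dist xinf (x k)"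
        by (intro tendsto_intros)
      then have "dist xinf (x k) \<le> B * r^k" by (rule LIMSEQ_le_const2) (intro exI[of _ 0] allI impI cau2, simp)
      then show ?thesis by (simp add: dist_norm norm_minus_commute)
    qed
    have xinfS: "xinf \<in> S"
    proof -
      have "(\<lambda>k. D k) \<longlonglongrightarrow> infdist xinf S" unfolding D_def by (intro tendsto_intros lim)
      moreover have "(\<lambda>k. d0 * r^k) \<longlonglongrightarrow> 0"
        using LIMSEQ_power_zero[of r] r0 r1 by (intro tendsto_mult_right_zero) auto
      moreover have "\<exists>N. \<forall>n\<ge>N. D n \<le> d0 * r^n" using Dk by blast
      ultimately have "infdist xinf S \<le> 0" by (rule LIMSEQ_le)
      then have "infdist xinf S = 0" using infdist_nonneg[of xinf S] by linarith
      then show ?thesis using in_closed_iff_infdist_zero[OF Sc Sne] by simp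
    qed
    have rpow: "r^k = q powr (real k / 2)" for k
    proof -
      have "q powr (real k / 2) = (q powr (1/2)) powr real k" by (simp add: powr_powr)
      also have "q powr (1/2) = r" unfolding r_def using q19 by (simp add: powr_half_sqrt)
      also have "r powr real k = r^k" using r0 by (simp add: powr_realpow)
      finally show ?thesis by simp
    qed
    show ?thesis
    proof (intro conjI allI bexI[of _ xinf])
      fix k show "x k \<in> cball xbar \<epsilon>" using Gk[of k] pos by simp
    next
      fix k show "(infdist (x (Suc k)) (argmin_on f X))\<^sup>2
            \<le> (1 - (\<mu> / L)\<^sup>2 / 2) * (infdist (x k) (argmin_on f X))\<^sup>2"
        using conjunct1[OF conjunct2[OF OSk[of k]]] by (simp only: D_def S_def q_def)
    next
      show "x \<longlonglongrightarrow> xinf" by (rule lim)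
    next
      fix k
      have "norm (x k - xinf) \<le> B * r^k" by (rule bnd)
      also have "\<dots> \<le> 16 * L ^ 3 * d0 / (3 * \<mu> ^ 3) * r^k"
        using Bfin r0 by (intro mult_right_mono) auto
      finally show "norm (x k - xinf) \<le> 16 * L ^ 3 * infdist (x 0) (argmin_on f X) / (3 * \<mu> ^ 3)
              * (1 - (\<mu> / L)\<^sup>2 / 2) powr (real k / 2)"
        using rpow[of k] unfolding d0_def D_def S_def q_def by simp
    next
      show "xinf \<in> argmin_on f X" using xinfS S_def by simp
    qed
  qed
qed

end
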